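(* Let $\mathcal B$ be a bicategory (a skew bicategory whose constraints $\alpha,\lambda,\rho$ are all invertible). Suppose given data $(D,T,K,v,k,v_0)$ on $\mathcal B$ as in the definition of a skew warping below, with all components of $v$, $k$ and $v_0$ invertible, satisfying axioms (W1) and (W2). Then axioms (W3), (W4) and (W5) also hold; that is, the data is a warping on $\mathcal B$.
   Context: Notation: for 1-cells $f\colon X\to Y$, $g\colon Y\to Z$ write $g\cdot f\colon X\to Z$ for their composite, $1$ or $1_X$ for identity 1-cells, and $\theta\cdot f$, $g\cdot\theta$ for whiskerings of 2-cells. A skew bicategory $\mathcal B$ consists of objects; hom-categories $\mathcal B(X,Y)$; composition functors $\mathcal B(Y,Z)\times\mathcal B(X,Y)\to\mathcal B(X,Z)$; identity 1-cells $1_X$; and natural (not necessarily invertible) 2-cells $\alpha_{f,g,h}\colon (h\cdot g)\cdot f\to h\cdot(g\cdot f)$, $\lambda_f\colon 1\cdot f\to f$, $\rho_f\colon f\to f\cdot 1$, subject to: (B1) $(k\cdot\alpha_{f,g,h})\circ\alpha_{f,h\cdot g,k}\circ(\alpha_{g,h,k}\cdot f)=\alpha_{g\cdot f,h,k}\circ\alpha_{f,g,k\cdot h}$; (B2) $(g\cdot\lambda_f)\circ\alpha_{f,1,g}\circ(\rho_g\cdot f)=1_{g\cdot f}$; (B3) $\lambda_{g\cdot f}\circ\alpha_{f,g,1}=\lambda_g\cdot f$; (B4) $\alpha_{1,f,g}\circ\rho_{g\cdot f}=g\cdot\rho_f$; (B5) $\lambda_1\circ\rho_1=1_{1}$. A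 skew warping on a skew bicategory $\mathcal B$ consists of: a function $D$ on objects; functors $T\colon\mathcal B(X,DY)\to\mathcal B(DX,DY)$; 1-cells $K=K_X\colon X\to DX$; natural 2-cells $v=v_{g,f}\colon T(Tg\cdot f)\to Tg\cdot Tf$ (for $f\colon X\to DY$, $g\colon Y\to DZ$), $k=k_f\colon f\to Tf\cdot K_X$ (for $f\colon X\to DY$), and 2-cells $v_0=v_{0,Y}\colon TK_Y\to 1_{DY}$, subject to the following axioms, for all $f\colon X\to DY$, $g\colon Y\to DZ$, $h\colon Z\to DW$: (W1) $\alpha\circ(v_{h,g}\cdot Tf)\circ v_{Th\cdot g,f}=(Th\cdot v_{g,f})\circ v_{h,Tg\cdot f}\circ T(\alpha)\circ T(v_{h,g}\cdot f)$ as 2-cells $T(T(Th\cdot g)\cdot f)\to Th\cdot(Tg\cdot Tf)$; (W2) $(Tf\cdot v_{0,X})\circ v_{f,K_X}\circ T(k_f)=\rho_{Tf}\colon Tf\to Tf\cdot 1$; (W3) $\lambda_{Tf}\circ(v_{0,Y}\cdot Tf)\circ v_{K_Y,f}=T(\lambda_f)\circ T(v_{0,Y}\cdot f)\colon T(TK_Y\cdot f)\to Tf$; (W4) $\alpha\circ(v_{g,f}\cdot K_X)\circ k_{Tg\cdot f}=Tg\cdot k_f\colon Tg\cdot f\to Tg\cdot(Tf\cdot K_X)$; (W5) $\lambda_{K_X}\circ(v_{0,X}\cdot K_X)\circ k_{K_X}=1_{K_X}$. A warping on a bicategory is a skew warping for which $v$, $k$, $v_0$ are invertible. *)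

theory Defs
  imports Main
begin

text \<open>VComp B psi phi is the vertical composite psi o phi (phi first);
  HComp1 B g f is the 1-cell composite g.f;
  HComp2 B psi phi is the horizontal composite of 2-cells (psi over g, phi over f);
  Alpha B f g h : (h.g).f --> h.(g.f);  Lam B f : 1.f --> f;  Rho B f : f --> f.1.\<close>

record ('o,'a,'c) bicat_data =
  Ob :: "'o set"
  Arr1 :: "'a set"
  Src :: "'a \<Rightarrow> 'o"
  Trg :: "'a \<Rightarrow> 'o"
  Arr2 :: "'c set"
  Dom :: "'c \<Rightarrow> 'a"
  Cod :: "'c \<Rightarrow> 'a"
  VComp :: "'c \<Rightarrow> 'c \<Rightarrow> 'c"
  Id2 :: "'a \<Rightarrow> 'c"
  HComp1 :: "'a \<Rightarrow> 'a \<Rightarrow> 'a"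
  HComp2 :: "'c \<Rightarrow> 'c \<Rightarrow> 'c"
  Id1 :: "'o \<Rightarrow> 'a"
  Alpha :: "'a \<Rightarrow> 'a \<Rightarrow> 'a \<Rightarrow> 'c"
  Lam :: "'a \<Rightarrow> 'c"
  Rho :: "'a \<Rightarrow> 'c"

definition hom1 :: "('o,'a,'c,'z) bicat_data_scheme \<Rightarrow> 'o \<Rightarrow> 'o \<Rightarrow> 'a set" where
  "hom1 B X Y = {f \<in> Arr1 B. Src B f = X \<and> Trg B f = Y}"

definition hom2 :: "('o,'a,'c,'z) bicat_data_scheme \<Rightarrow> 'a \<Rightarrow> 'a \<Rightarrow> 'c set" where
  "hom2 B f g = {\<phi> \<in> Arr2 B. Dom B \<phi> = f \<and> Cod B \<phi> = g}"

definition wl :: "('o,'a,'c,'z) bicat_data_scheme \<Rightarrow> 'c \<Rightarrow> 'a \<Rightarrow> 'c" where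
  "wl B \<theta> f = HComp2 B \<theta> (Id2 B f)"

definition wr :: "('o,'a,'c,'z) bicat_data_scheme \<Rightarrow> 'a \<Rightarrow> 'c \<Rightarrow> 'c" where
  "wr B g \<theta> = HComp2 B (Id2 B g) \<theta>"

definition invertible2 :: "('o,'a,'c,'z) bicat_data_scheme \<Rightarrow> 'c \<Rightarrow> bool" where
  "invertible2 B \<phi> \<longleftrightarrow> \<phi> \<in> Arr2 B \<and>
     (\<exists>\<psi> \<in> hom2 B (Cod B \<phi>) (Dom B \<phi>).
        VComp B \<psi> \<phi> = Id2 B (Dom B \<phi>) \<and> VComp B \<phi> \<psi> = Id2 B (Cod B \<phi>))"

definition skew_bicategory :: "('o,'a,'c,'z) bicat_data_scheme \<Rightarrow> bool" where
  "skew_bicategory B \<longleftrightarrow>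
    \<comment> \<open>1-cells have objects as source and target\<close>
    (\<forall>f \<in> Arr1 B. Src B f \<in> Ob B \<and> Trg B f \<in> Ob B) \<and>
    \<comment> \<open>hom-categories\<close>
    (\<forall>\<phi> \<in> Arr2 B. Dom B \<phi> \<in> Arr1 B \<and> Cod B \<phi> \<in> Arr1 B \<and>
        Src B (Dom B \<phi>) = Src B (Cod B \<phi>) \<and> Trg B (Dom B \<phi>) = Trg B (Cod B \<phi>)) \<and>
    (\<forall>f \<in> Arr1 B. Id2 B f \<in> hom2 B f f) \<and>
    (\<forall>f g h \<phi> \<psi>. \<phi> \<in> hom2 B f g \<longrightarrow> \<psi> \<in> hom2 B g h \<longrightarrow> VComp B \<psi> \<phi> \<in> hom2 B f h) \<and>
    (\<forall>f g h k \<phi> \<psi> \<chi>. \<phi> \<in> hom2 B f g \<longrightarrow> \<psi> \<in> hom2 B g h \<longrightarrow> \<chi> \<in> hom2 B h k \<longrightarrow>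
        VComp B \<chi> (VComp B \<psi> \<phi>) = VComp B (VComp B \<chi> \<psi>) \<phi>) \<and>
    (\<forall>f g \<phi>. \<phi> \<in> hom2 B f g \<longrightarrow> VComp B (Id2 B g) \<phi> = \<phi> \<and> VComp B \<phi> (Id2 B f) = \<phi>) \<and>
    \<comment> \<open>composition functors\<close>
    (\<forall>X Y Z f g. f \<in> hom1 B X Y \<longrightarrow> g \<in> hom1 B Y Z \<longrightarrow> HComp1 B g f \<in> hom1 B X Z) \<and>
    (\<forall>\<phi> \<psi>. \<phi> \<in> Arr2 B \<longrightarrow> \<psi> \<in> Arr2 B \<longrightarrow> Trg B (Dom B \<phi>) = Src B (Dom B \<psi>) \<longrightarrow>
        HComp2 B \<psi> \<phi> \<in> hom2 B (HComp1 B (Dom B \<psi>) (Dom B \<phi>)) (HComp1 B (Cod B \<psi>) (Cod B \<phi>))) \<and>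
    (\<forall>f g. f \<in> Arr1 B \<longrightarrow> g \<in> Arr1 B \<longrightarrow> Trg B f = Src B g \<longrightarrow>
        HComp2 B (Id2 B g) (Id2 B f) = Id2 B (HComp1 B g f)) \<and>
    (\<forall>f f' f'' g g' g'' \<phi> \<phi>' \<psi> \<psi>'. \<phi> \<in> hom2 B f f' \<longrightarrow> \<phi>' \<in> hom2 B f' f'' \<longrightarrow>
        \<psi> \<in> hom2 B g g' \<longrightarrow> \<psi>' \<in> hom2 B g' g'' \<longrightarrow> Trg B f = Src B g \<longrightarrow>
        HComp2 B (VComp B \<psi>' \<psi>) (VComp B \<phi>' \<phi>) = VComp B (HComp2 B \<psi>' \<phi>') (HComp2 B \<psi> \<phi>)) \<and>
    \<comment> \<open>identity 1-cells\<close>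
    (\<forall>X \<in> Ob B. Id1 B X \<in> hom1 B X X) \<and>
    \<comment> \<open>constraint 2-cells and their naturality\<close>
    (\<forall>f g h. f \<in> Arr1 B \<longrightarrow> g \<in> Arr1 B \<longrightarrow> h \<in> Arr1 B \<longrightarrow> Trg B f = Src B g \<longrightarrow> Trg B g = Src B h \<longrightarrow>
        Alpha B f g h \<in> hom2 B (HComp1 B (HComp1 B h g) f) (HComp1 B h (HComp1 B g f))) \<and>
    (\<forall>f f' g g' h h' \<phi> \<psi> \<chi>. \<phi> \<in> hom2 B f f' \<longrightarrow> \<psi> \<in> hom2 B g g' \<longrightarrow> \<chi> \<in> hom2 B h h' \<longrightarrow>
        Trg B f = Src B g \<longrightarrow> Trg B g = Src B h \<longrightarrow>
        VComp B (Alpha B f' g' h') (HComp2 B (HComp2 B \<chi> \<psi>) \<phi>)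
          = VComp B (HComp2 B \<chi> (HComp2 B \<psi> \<phi>)) (Alpha B f g h)) \<and>
    (\<forall>f \<in> Arr1 B. Lam B f \<in> hom2 B (HComp1 B (Id1 B (Trg B f)) f) f) \<and>
    (\<forall>f f' \<phi>. \<phi> \<in> hom2 B f f' \<longrightarrow>
        VComp B \<phi> (Lam B f) = VComp B (Lam B f') (HComp2 B (Id2 B (Id1 B (Trg B f))) \<phi>)) \<and>
    (\<forall>f \<in> Arr1 B. Rho B f \<in> hom2 B f (HComp1 B f (Id1 B (Src B f)))) \<and>
    (\<forall>f f' \<phi>. \<phi> \<in> hom2 B f f' \<longrightarrow>
        VComp B (Rho B f') \<phi> = VComp B (HComp2 B \<phi> (Id2 B (Id1 B (Src B f)))) (Rho B f)) \<and>
    \<comment> \<open>(B1)\<close>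
    (\<forall>f g h k. f \<in> Arr1 B \<longrightarrow> g \<in> Arr1 B \<longrightarrow> h \<in> Arr1 B \<longrightarrow> k \<in> Arr1 B \<longrightarrow>
        Trg B f = Src B g \<longrightarrow> Trg B g = Src B h \<longrightarrow> Trg B h = Src B k \<longrightarrow>
        VComp B (wr B k (Alpha B f g h))
          (VComp B (Alpha B f (HComp1 B h g) k) (wl B (Alpha B g h k) f))
        = VComp B (Alpha B (HComp1 B g f) h k) (Alpha B f g (HComp1 B k h))) \<and>
    \<comment> \<open>(B2)\<close>
    (\<forall>f g. f \<in> Arr1 B \<longrightarrow> g \<in> Arr1 B \<longrightarrow> Trg B f = Src B g \<longrightarrow>
        VComp B (wr B g (Lam B f))
          (VComp B (Alpha B f (Id1 B (Trg B f)) g) (wl B (Rho B g) f))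
        = Id2 B (HComp1 B g f)) \<and>
    \<comment> \<open>(B3)\<close>
    (\<forall>f g. f \<in> Arr1 B \<longrightarrow> g \<in> Arr1 B \<longrightarrow> Trg B f = Src B g \<longrightarrow>
        VComp B (Lam B (HComp1 B g f)) (Alpha B f g (Id1 B (Trg B g))) = wl B (Lam B g) f) \<and>
    \<comment> \<open>(B4)\<close>
    (\<forall>f g. f \<in> Arr1 B \<longrightarrow> g \<in> Arr1 B \<longrightarrow> Trg B f = Src B g \<longrightarrow>
        VComp B (Alpha B (Id1 B (Src B f)) f g) (Rho B (HComp1 B g f)) = wr B g (Rho B f)) \<and>
    \<comment> \<open>(B5)\<close>
    (\<forall>X \<in> Ob B. VComp B (Lam B (Id1 B X)) (Rho B (Id1 B X)) = Id2 B (Id1 B X))"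

definition bicategory :: "('o,'a,'c,'z) bicat_data_scheme \<Rightarrow> bool" where
  "bicategory B \<longleftrightarrow> skew_bicategory B \<and>
    (\<forall>f g h. f \<in> Arr1 B \<longrightarrow> g \<in> Arr1 B \<longrightarrow> h \<in> Arr1 B \<longrightarrow> Trg B f = Src B g \<longrightarrow> Trg B g = Src B h \<longrightarrow>
        invertible2 B (Alpha B f g h)) \<and>
    (\<forall>f \<in> Arr1 B. invertible2 B (Lam B f) \<and> invertible2 B (Rho B f))"

text \<open>The functor T : B(X,DY) --> B(DX,DY) is indexed by the pair (X,Y):
  WT W X Y on 1-cells, WT2 W X Y on 2-cells.
  For f : X --> DY and g : Y --> DZ, v_{g,f} = Wv W X Y Z g f.\<close>

record ('o,'a,'c) warp_data =
  WD :: "'o \<Rightarrow> 'o"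
  WT :: "'o \<Rightarrow> 'o \<Rightarrow> 'a \<Rightarrow> 'a"
  WT2 :: "'o \<Rightarrow> 'o \<Rightarrow> 'c \<Rightarrow> 'c"
  WK :: "'o \<Rightarrow> 'a"
  Wv :: "'o \<Rightarrow> 'o \<Rightarrow> 'o \<Rightarrow> 'a \<Rightarrow> 'a \<Rightarrow> 'c"
  Wk :: "'o \<Rightarrow> 'o \<Rightarrow> 'a \<Rightarrow> 'c"
  Wv0 :: "'o \<Rightarrow> 'c"

definition warping_data ::
  "('o,'a,'c,'z) bicat_data_scheme \<Rightarrow> ('o,'a,'c,'w) warp_data_scheme \<Rightarrow> bool" where
  "warping_data B W \<longleftrightarrow>
    (\<forall>X \<in> Ob B. WD W X \<in> Ob B) \<and>
    (\<forall>X \<in> Ob B. \<forall>Y \<in> Ob B. \<forall>f \<in> hom1 B X (WD W Y). WT W X Y f \<in> hom1 B (WD W X) (WD W Y)) \<and>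
    (\<forall>X \<in> Ob B. \<forall>Y \<in> Ob B. \<forall>f g \<phi>. f \<in> hom1 B X (WD W Y) \<longrightarrow> \<phi> \<in> hom2 B f g \<longrightarrow>
        WT2 W X Y \<phi> \<in> hom2 B (WT W X Y f) (WT W X Y g)) \<and>
    (\<forall>X \<in> Ob B. \<forall>Y \<in> Ob B. \<forall>f \<in> hom1 B X (WD W Y). WT2 W X Y (Id2 B f) = Id2 B (WT W X Y f)) \<and>
    (\<forall>X \<in> Ob B. \<forall>Y \<in> Ob B. \<forall>f g h \<phi> \<psi>. f \<in> hom1 B X (WD W Y) \<longrightarrow> \<phi> \<in> hom2 B f g \<longrightarrow>
        \<psi> \<in> hom2 B g h \<longrightarrow> WT2 W X Y (VComp B \<psi> \<phi>) = VComp B (WT2 W X Y \<psi>) (WT2 W X Y \<phi>)) \<and>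
    (\<forall>X \<in> Ob B. WK W X \<in> hom1 B X (WD W X)) \<and>
    (\<forall>X \<in> Ob B. \<forall>Y \<in> Ob B. \<forall>Z \<in> Ob B. \<forall>f \<in> hom1 B X (WD W Y). \<forall>g \<in> hom1 B Y (WD W Z).
        Wv W X Y Z g f \<in> hom2 B (WT W X Z (HComp1 B (WT W Y Z g) f))
                                 (HComp1 B (WT W Y Z g) (WT W X Y f))) \<and>
    (\<forall>X \<in> Ob B. \<forall>Y \<in> Ob B. \<forall>Z \<in> Ob B. \<forall>f f' g g' \<phi> \<psi>.
        f \<in> hom1 B X (WD W Y) \<longrightarrow> g \<in> hom1 B Y (WD W Z) \<longrightarrow> \<phi> \<in> hom2 B f f' \<longrightarrow> \<psi> \<in> hom2 B g g' \<longrightarrow>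
        VComp B (Wv W X Y Z g' f') (WT2 W X Z (HComp2 B (WT2 W Y Z \<psi>) \<phi>))
          = VComp B (HComp2 B (WT2 W Y Z \<psi>) (WT2 W X Y \<phi>)) (Wv W X Y Z g f)) \<and>
    (\<forall>X \<in> Ob B. \<forall>Y \<in> Ob B. \<forall>f \<in> hom1 B X (WD W Y).
        Wk W X Y f \<in> hom2 B f (HComp1 B (WT W X Y f) (WK W X))) \<and>
    (\<forall>X \<in> Ob B. \<forall>Y \<in> Ob B. \<forall>f f' \<phi>. f \<in> hom1 B X (WD W Y) \<longrightarrow> \<phi> \<in> hom2 B f f' \<longrightarrow>
        VComp B (Wk W X Y f') \<phi> = VComp B (wl B (WT2 W X Y \<phi>) (WK W X)) (Wk W X Y f)) \<and>
    (\<forall>Y \<in> Ob B. Wv0 W Y \<in> hom2 B (WT W Y Y (WK W Y)) (Id1 B (WD W Y)))"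

definition W1 :: "('o,'a,'c,'z) bicat_data_scheme \<Rightarrow> ('o,'a,'c,'w) warp_data_scheme \<Rightarrow> bool" where
  "W1 B W \<longleftrightarrow> (\<forall>X \<in> Ob B. \<forall>Y \<in> Ob B. \<forall>Z \<in> Ob B. \<forall>V \<in> Ob B.
     \<forall>f \<in> hom1 B X (WD W Y). \<forall>g \<in> hom1 B Y (WD W Z). \<forall>h \<in> hom1 B Z (WD W V).
     let T = WT W; T2 = WT2 W; v = Wv W; c = HComp1 B in
     VComp B (Alpha B (T X Y f) (T Y Z g) (T Z V h))
       (VComp B (wl B (v Y Z V h g) (T X Y f)) (v X Y V (c (T Z V h) g) f))
     = VComp B (wr B (T Z V h) (v X Y Z g f))
        (VComp B (v X Z V h (c (T Y Z g) f))
          (VComp B (T2 X V (Alpha B f (T Y Z g) (T Z V h)))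
             (T2 X V (wl B (v Y Z V h g) f)))))"

definition W2 :: "('o,'a,'c,'z) bicat_data_scheme \<Rightarrow> ('o,'a,'c,'w) warp_data_scheme \<Rightarrow> bool" where
  "W2 B W \<longleftrightarrow> (\<forall>X \<in> Ob B. \<forall>Y \<in> Ob B. \<forall>f \<in> hom1 B X (WD W Y).
     VComp B (wr B (WT W X Y f) (Wv0 W X))
       (VComp B (Wv W X X Y f (WK W X)) (WT2 W X Y (Wk W X Y f)))
     = Rho B (WT W X Y f))"

definition W3 :: "('o,'a,'c,'z) bicat_data_scheme \<Rightarrow> ('o,'a,'c,'w) warp_data_scheme \<Rightarrow> bool" where
  "W3 B W \<longleftrightarrow> (\<forall>X \<in> Ob B. \<forall>Y \<in> Ob B. \<forall>f \<in> hom1 B X (WD W Y).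
     VComp B (Lam B (WT W X Y f))
       (VComp B (wl B (Wv0 W Y) (WT W X Y f)) (Wv W X Y Y (WK W Y) f))
     = VComp B (WT2 W X Y (Lam B f)) (WT2 W X Y (wl B (Wv0 W Y) f)))"

definition W4 :: "('o,'a,'c,'z) bicat_data_scheme \<Rightarrow> ('o,'a,'c,'w) warp_data_scheme \<Rightarrow> bool" where
  "W4 B W \<longleftrightarrow> (\<forall>X \<in> Ob B. \<forall>Y \<in> Ob B. \<forall>Z \<in> Ob B.
     \<forall>f \<in> hom1 B X (WD W Y). \<forall>g \<in> hom1 B Y (WD W Z).
     VComp B (Alpha B (WK W X) (WT W X Y f) (WT W Y Z g))
       (VComp B (wl B (Wv W X Y Z g f) (WK W X)) (Wk W X Z (HComp1 B (WT W Y Z g) f)))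
     = wr B (WT W Y Z g) (Wk W X Y f))"

definition W5 :: "('o,'a,'c,'z) bicat_data_scheme \<Rightarrow> ('o,'a,'c,'w) warp_data_scheme \<Rightarrow> bool" where
  "W5 B W \<longleftrightarrow> (\<forall>X \<in> Ob B.
     VComp B (Lam B (WK W X)) (VComp B (wl B (Wv0 W X) (WK W X)) (Wk W X X (WK W X)))
     = Id2 B (WK W X))"

definition skew_warping ::
  "('o,'a,'c,'z) bicat_data_scheme \<Rightarrow> ('o,'a,'c,'w) warp_data_scheme \<Rightarrow> bool" where
  "skew_warping B W \<longleftrightarrow> warping_data B W \<and> W1 B W \<and> W2 B W \<and> W3 B W \<and> W4 B W \<and> W5 B W"

definition warping_invertible ::
  "('o,'a,'c,'z) bicat_data_scheme \<Rightarrow> ('o,'a,'c,'w) warp_data_scheme \<Rightarrow> bool" where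
  "warping_invertible B W \<longleftrightarrow>
    (\<forall>X \<in> Ob B. \<forall>Y \<in> Ob B. \<forall>Z \<in> Ob B. \<forall>f \<in> hom1 B X (WD W Y). \<forall>g \<in> hom1 B Y (WD W Z).
        invertible2 B (Wv W X Y Z g f)) \<and>
    (\<forall>X \<in> Ob B. \<forall>Y \<in> Ob B. \<forall>f \<in> hom1 B X (WD W Y). invertible2 B (Wk W X Y f)) \<and>
    (\<forall>Y \<in> Ob B. invertible2 B (Wv0 W Y))"

definition warping ::
  "('o,'a,'c,'z) bicat_data_scheme \<Rightarrow> ('o,'a,'c,'w) warp_data_scheme \<Rightarrow> bool" where
  "warping B W \<longleftrightarrow> bicategory B \<and> skew_warping B W \<and> warping_invertible B W"

end

theory Submission
  imports Defs
begin

locale ctx =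
  fixes B :: "('o,'a,'c) bicat_data" and W :: "('o,'a,'c) warp_data"
  assumes bic: "bicategory B" and wd: "warping_data B W" and wi: "warping_invertible B W"
begin

lemma sb: "skew_bicategory B" using bic unfolding bicategory_def by simp

lemmas sbd = sb[unfolded skew_bicategory_def]
lemmas c1 = sbd[THEN conjunct1]
lemmas r1 = sbd[THEN conjunct2]
lemmas c2 = r1[THEN conjunct1]
lemmas r2 = r1[THEN conjunct2]
lemmas c3 = r2[THEN conjunct1]
lemmas r3 = r2[THEN conjunct2]
lemmas c4 = r3[THEN conjunct1]
lemmas r4 = r3[THEN conjunct2]
lemmas c5 = r4[THEN conjunct1]
lemmas r5 = r4[THEN conjunct2]
lemmas c6 = r5[THEN conjunct1]
lemmas r6 = r5[THEN conjunct2]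
lemmas c7 = r6[THEN conjunct1]
lemmas r7 = r6[THEN conjunct2]
lemmas c8 = r7[THEN conjunct1]
lemmas r8 = r7[THEN conjunct2]
lemmas c9 = r8[THEN conjunct1]
lemmas r9 = r8[THEN conjunct2]
lemmas c10 = r9[THEN conjunct1]
lemmas r10 = r9[THEN conjunct2]
lemmas c11 = r10[THEN conjunct1]
lemmas r11 = r10[THEN conjunct2]
lemmas c12 = r11[THEN conjunct1]
lemmas r12 = r11[THEN conjunct2]
lemmas c13 = r12[THEN conjunct1]
lemmas r13 = r12[THEN conjunct2]
lemmas c14 = r13[THEN conjunct1]
lemmas r14 = r13[THEN conjunct2]
lemmas c15 = r14[THEN conjunct1]
lemmas r15 = r14[THEN conjunct2]
lemmas c16 = r15[THEN conjunct1]
lemmas r16 = r15[THEN conjunct2]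
lemmas c17 = r16[THEN conjunct1]
lemmas r17 = r16[THEN conjunct2]
lemmas c18 = r17[THEN conjunct1]
lemmas r18 = r17[THEN conjunct2]
lemmas c19 = r18[THEN conjunct1]
lemmas r19 = r18[THEN conjunct2]
lemmas c20 = r19[THEN conjunct1]
lemmas r20 = r19[THEN conjunct2]
lemmas c21 = r20[THEN conjunct1]
lemmas c22 = r20[THEN conjunct2]

lemmas wdd = wd[unfolded warping_data_def]
lemmas d1 = wdd[THEN conjunct1]
lemmas s1 = wdd[THEN conjunct2]
lemmas d2 = s1[THEN conjunct1]
lemmas s2 = s1[THEN conjunct2]
lemmas d3 = s2[THEN conjunct1]
lemmas s3 = s2[THEN conjunct2]
lemmas d4 = s3[THEN conjunct1]
lemmas s4 = s3[THEN conjunct2]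
lemmas d5 = s4[THEN conjunct1]
lemmas s5 = s4[THEN conjunct2]
lemmas d6 = s5[THEN conjunct1]
lemmas s6 = s5[THEN conjunct2]
lemmas d7 = s6[THEN conjunct1]
lemmas s7 = s6[THEN conjunct2]
lemmas d8 = s7[THEN conjunct1]
lemmas s8 = s7[THEN conjunct2]
lemmas d9 = s8[THEN conjunct1]
lemmas s9 = s8[THEN conjunct2]
lemmas d10 = s9[THEN conjunct1]
lemmas d11 = s9[THEN conjunct2]

lemma src_ob[simp]: "f \<in> Arr1 B \<Longrightarrow> Src B f \<in> Ob B" using c1 by blast
lemma trg_ob[simp]: "f \<in> Arr1 B \<Longrightarrow> Trg B f \<in> Ob B" using c1 by blast
lemma dom_arr[simp]: "\<phi> \<in> Arr2 B \<Longrightarrow> Dom B \<phi> \<in> Arr1 B" using c2 by blast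
lemma cod_arr[simp]: "\<phi> \<in> Arr2 B \<Longrightarrow> Cod B \<phi> \<in> Arr1 B" using c2 by blast
lemma src_cod[simp]: "\<phi> \<in> Arr2 B \<Longrightarrow> Src B (Cod B \<phi>) = Src B (Dom B \<phi>)" using c2 by auto
lemma trg_cod[simp]: "\<phi> \<in> Arr2 B \<Longrightarrow> Trg B (Cod B \<phi>) = Trg B (Dom B \<phi>)" using c2 by auto
lemma id2_arr[simp]: "f \<in> Arr1 B \<Longrightarrow> Id2 B f \<in> Arr2 B" using c3 unfolding hom2_def by blast
lemma id2_dom[simp]: "f \<in> Arr1 B \<Longrightarrow> Dom B (Id2 B f) = f" using c3 unfolding hom2_def by blast
lemma id2_cod[simp]: "f \<in> Arr1 B \<Longrightarrow> Cod B (Id2 B f) = f" using c3 unfolding hom2_def by blast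

lemma vc_arr[simp]: "\<phi> \<in> Arr2 B \<Longrightarrow> \<psi> \<in> Arr2 B \<Longrightarrow> Dom B \<psi> = Cod B \<phi> \<Longrightarrow> VComp B \<psi> \<phi> \<in> Arr2 B"
  using c4 unfolding hom2_def by blast
lemma vc_dom[simp]: "\<phi> \<in> Arr2 B \<Longrightarrow> \<psi> \<in> Arr2 B \<Longrightarrow> Dom B \<psi> = Cod B \<phi> \<Longrightarrow> Dom B (VComp B \<psi> \<phi>) = Dom B \<phi>"
  using c4 unfolding hom2_def by blast
lemma vc_cod[simp]: "\<phi> \<in> Arr2 B \<Longrightarrow> \<psi> \<in> Arr2 B \<Longrightarrow> Dom B \<psi> = Cod B \<phi> \<Longrightarrow> Cod B (VComp B \<psi> \<phi>) = Cod B \<psi>"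
  using c4 unfolding hom2_def by blast
lemma vc_assoc[simp]: "\<phi> \<in> Arr2 B \<Longrightarrow> \<psi> \<in> Arr2 B \<Longrightarrow> \<chi> \<in> Arr2 B \<Longrightarrow> Dom B \<psi> = Cod B \<phi> \<Longrightarrow> Dom B \<chi> = Cod B \<psi> \<Longrightarrow>
   VComp B (VComp B \<chi> \<psi>) \<phi> = VComp B \<chi> (VComp B \<psi> \<phi>)"
  using c5[rule_format, where f="Dom B \<phi>" and g="Cod B \<phi>" and h="Cod B \<psi>" and k="Cod B \<chi>"] unfolding hom2_def by auto
lemma vc_idl[simp]: "\<phi> \<in> Arr2 B \<Longrightarrow> Cod B \<phi> = g \<Longrightarrow> VComp B (Id2 B g) \<phi> = \<phi>"
  using c6 unfolding hom2_def by blast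
lemma vc_idr[simp]: "\<phi> \<in> Arr2 B \<Longrightarrow> Dom B \<phi> = g \<Longrightarrow> VComp B \<phi> (Id2 B g) = \<phi>"
  using c6 unfolding hom2_def by blast

lemma hc1_arr[simp]: "f \<in> Arr1 B \<Longrightarrow> g \<in> Arr1 B \<Longrightarrow> Trg B f = Src B g \<Longrightarrow> HComp1 B g f \<in> Arr1 B"
  using c7 unfolding hom1_def by blast
lemma hc1_src[simp]: "f \<in> Arr1 B \<Longrightarrow> g \<in> Arr1 B \<Longrightarrow> Trg B f = Src B g \<Longrightarrow> Src B (HComp1 B g f) = Src B f"
  using c7 unfolding hom1_def by blast
lemma hc1_trg[simp]: "f \<in> Arr1 B \<Longrightarrow> g \<in> Arr1 B \<Longrightarrow> Trg B f = Src B g \<Longrightarrow> Trg B (HComp1 B g f) = Trg B g"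
  using c7 unfolding hom1_def by blast

lemma hc2_arr[simp]: "\<phi> \<in> Arr2 B \<Longrightarrow> \<psi> \<in> Arr2 B \<Longrightarrow> Trg B (Dom B \<phi>) = Src B (Dom B \<psi>) \<Longrightarrow> HComp2 B \<psi> \<phi> \<in> Arr2 B"
  using c8 unfolding hom2_def by blast
lemma hc2_dom[simp]: "\<phi> \<in> Arr2 B \<Longrightarrow> \<psi> \<in> Arr2 B \<Longrightarrow> Trg B (Dom B \<phi>) = Src B (Dom B \<psi>) \<Longrightarrow> Dom B (HComp2 B \<psi> \<phi>) = HComp1 B (Dom B \<psi>) (Dom B \<phi>)"
  using c8 unfolding hom2_def by blast
lemma hc2_cod[simp]: "\<phi> \<in> Arr2 B \<Longrightarrow> \<psi> \<in> Arr2 B \<Longrightarrow> Trg B (Dom B \<phi>) = Src B (Dom B \<psi>) \<Longrightarrow> Cod B (HComp2 B \<psi> \<phi>) = HComp1 B (Cod B \<psi>) (Cod B \<phi>)"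
  using c8 unfolding hom2_def by blast
lemma hc2_id[simp]: "f \<in> Arr1 B \<Longrightarrow> g \<in> Arr1 B \<Longrightarrow> Trg B f = Src B g \<Longrightarrow> HComp2 B (Id2 B g) (Id2 B f) = Id2 B (HComp1 B g f)"
  using c9 by blast
lemma interchange: "\<phi> \<in> Arr2 B \<Longrightarrow> \<phi>' \<in> Arr2 B \<Longrightarrow> \<psi> \<in> Arr2 B \<Longrightarrow> \<psi>' \<in> Arr2 B \<Longrightarrow>
   Dom B \<phi>' = Cod B \<phi> \<Longrightarrow> Dom B \<psi>' = Cod B \<psi> \<Longrightarrow> Trg B (Dom B \<phi>) = Src B (Dom B \<psi>) \<Longrightarrow>
   HComp2 B (VComp B \<psi>' \<psi>) (VComp B \<phi>' \<phi>) = VComp B (HComp2 B \<psi>' \<phi>') (HComp2 B \<psi> \<phi>)"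
  using c10[rule_format, where f="Dom B \<phi>" and f'="Cod B \<phi>" and f''="Cod B \<phi>'" and g="Dom B \<psi>" and g'="Cod B \<psi>" and g''="Cod B \<psi>'"] unfolding hom2_def by auto
lemma id1_arr[simp]: "X \<in> Ob B \<Longrightarrow> Id1 B X \<in> Arr1 B" using c11 unfolding hom1_def by blast
lemma id1_src[simp]: "X \<in> Ob B \<Longrightarrow> Src B (Id1 B X) = X" using c11 unfolding hom1_def by blast
lemma id1_trg[simp]: "X \<in> Ob B \<Longrightarrow> Trg B (Id1 B X) = X" using c11 unfolding hom1_def by blast

lemma alpha_arr[simp]: "f \<in> Arr1 B \<Longrightarrow> g \<in> Arr1 B \<Longrightarrow> h \<in> Arr1 B \<Longrightarrow> Trg B f = Src B g \<Longrightarrow> Trg B g = Src B h \<Longrightarrow>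
   Alpha B f g h \<in> Arr2 B" using c12 unfolding hom2_def by blast
lemma alpha_dom[simp]: "f \<in> Arr1 B \<Longrightarrow> g \<in> Arr1 B \<Longrightarrow> h \<in> Arr1 B \<Longrightarrow> Trg B f = Src B g \<Longrightarrow> Trg B g = Src B h \<Longrightarrow>
   Dom B (Alpha B f g h) = HComp1 B (HComp1 B h g) f" using c12 unfolding hom2_def by blast
lemma alpha_cod[simp]: "f \<in> Arr1 B \<Longrightarrow> g \<in> Arr1 B \<Longrightarrow> h \<in> Arr1 B \<Longrightarrow> Trg B f = Src B g \<Longrightarrow> Trg B g = Src B h \<Longrightarrow>
   Cod B (Alpha B f g h) = HComp1 B h (HComp1 B g f)" using c12 unfolding hom2_def by blast
lemma alpha_nat: "\<phi> \<in> Arr2 B \<Longrightarrow> \<psi> \<in> Arr2 B \<Longrightarrow> \<chi> \<in> Arr2 B \<Longrightarrow> Trg B (Dom B \<phi>) = Src B (Dom B \<psi>) \<Longrightarrow>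
   Trg B (Dom B \<psi>) = Src B (Dom B \<chi>) \<Longrightarrow>
   VComp B (Alpha B (Cod B \<phi>) (Cod B \<psi>) (Cod B \<chi>)) (HComp2 B (HComp2 B \<chi> \<psi>) \<phi>)
   = VComp B (HComp2 B \<chi> (HComp2 B \<psi> \<phi>)) (Alpha B (Dom B \<phi>) (Dom B \<psi>) (Dom B \<chi>))"
proof -
  assume a: "\<phi> \<in> Arr2 B" "\<psi> \<in> Arr2 B" "\<chi> \<in> Arr2 B" "Trg B (Dom B \<phi>) = Src B (Dom B \<psi>)"
    "Trg B (Dom B \<psi>) = Src B (Dom B \<chi>)"
  show ?thesis using c13[rule_format, where f="Dom B \<phi>" and f'="Cod B \<phi>" and g="Dom B \<psi>" and g'="Cod B \<psi>" and h="Dom B \<chi>" and h'="Cod B \<chi>"] a unfolding hom2_def by auto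
qed
lemma lam_arr[simp]: "f \<in> Arr1 B \<Longrightarrow> Lam B f \<in> Arr2 B" using c14 unfolding hom2_def by blast
lemma lam_dom[simp]: "f \<in> Arr1 B \<Longrightarrow> Dom B (Lam B f) = HComp1 B (Id1 B (Trg B f)) f" using c14 unfolding hom2_def by blast
lemma lam_cod[simp]: "f \<in> Arr1 B \<Longrightarrow> Cod B (Lam B f) = f" using c14 unfolding hom2_def by blast
lemma lam_nat: "\<phi> \<in> Arr2 B \<Longrightarrow> VComp B \<phi> (Lam B (Dom B \<phi>)) = VComp B (Lam B (Cod B \<phi>)) (HComp2 B (Id2 B (Id1 B (Trg B (Dom B \<phi>)))) \<phi>)"
  using c15[rule_format, where f="Dom B \<phi>" and f'="Cod B \<phi>"] unfolding hom2_def by auto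
lemma rho_arr[simp]: "f \<in> Arr1 B \<Longrightarrow> Rho B f \<in> Arr2 B" using c16 unfolding hom2_def by blast
lemma rho_dom[simp]: "f \<in> Arr1 B \<Longrightarrow> Dom B (Rho B f) = f" using c16 unfolding hom2_def by blast
lemma rho_cod[simp]: "f \<in> Arr1 B \<Longrightarrow> Cod B (Rho B f) = HComp1 B f (Id1 B (Src B f))" using c16 unfolding hom2_def by blast
lemma rho_nat: "\<phi> \<in> Arr2 B \<Longrightarrow> VComp B (Rho B (Cod B \<phi>)) \<phi> = VComp B (HComp2 B \<phi> (Id2 B (Id1 B (Src B (Dom B \<phi>))))) (Rho B (Dom B \<phi>))"
  using c17[rule_format, where f="Dom B \<phi>" and f'="Cod B \<phi>"] unfolding hom2_def by auto
lemma B2: "f \<in> Arr1 B \<Longrightarrow> g \<in> Arr1 B \<Longrightarrow> Trg B f = Src B g \<Longrightarrow>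
        VComp B (HComp2 B (Id2 B g) (Lam B f))
          (VComp B (Alpha B f (Id1 B (Trg B f)) g) (HComp2 B (Rho B g) (Id2 B f)))
        = Id2 B (HComp1 B g f)" using c19 unfolding wl_def wr_def by blast
lemma B4: "f \<in> Arr1 B \<Longrightarrow> g \<in> Arr1 B \<Longrightarrow> Trg B f = Src B g \<Longrightarrow>
        VComp B (Alpha B (Id1 B (Src B f)) f g) (Rho B (HComp1 B g f)) = HComp2 B (Id2 B g) (Rho B f)"
  using c21 unfolding wl_def wr_def by blast
lemma B5: "X \<in> Ob B \<Longrightarrow> VComp B (Lam B (Id1 B X)) (Rho B (Id1 B X)) = Id2 B (Id1 B X)"
  using c22 by blast


lemma D_ob[simp]: "X \<in> Ob B \<Longrightarrow> WD W X \<in> Ob B" using d1 by blast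

lemma T_arr[simp]: "X \<in> Ob B \<Longrightarrow> Y \<in> Ob B \<Longrightarrow> f \<in> Arr1 B \<Longrightarrow> Src B f = X \<Longrightarrow> Trg B f = WD W Y \<Longrightarrow>
  WT W X Y f \<in> Arr1 B" using d2 unfolding hom1_def by blast
lemma T_src[simp]: "X \<in> Ob B \<Longrightarrow> Y \<in> Ob B \<Longrightarrow> f \<in> Arr1 B \<Longrightarrow> Src B f = X \<Longrightarrow> Trg B f = WD W Y \<Longrightarrow>
  Src B (WT W X Y f) = WD W X" using d2 unfolding hom1_def by blast
lemma T_trg[simp]: "X \<in> Ob B \<Longrightarrow> Y \<in> Ob B \<Longrightarrow> f \<in> Arr1 B \<Longrightarrow> Src B f = X \<Longrightarrow> Trg B f = WD W Y \<Longrightarrow>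
  Trg B (WT W X Y f) = WD W Y" using d2 unfolding hom1_def by blast

lemma T2_all: "X \<in> Ob B \<Longrightarrow> Y \<in> Ob B \<Longrightarrow> \<phi> \<in> Arr2 B \<Longrightarrow> Src B (Dom B \<phi>) = X \<Longrightarrow> Trg B (Dom B \<phi>) = WD W Y \<Longrightarrow>
  WT2 W X Y \<phi> \<in> Arr2 B \<and> Dom B (WT2 W X Y \<phi>) = WT W X Y (Dom B \<phi>) \<and> Cod B (WT2 W X Y \<phi>) = WT W X Y (Cod B \<phi>)"
  using d3[rule_format, where X=X and Y=Y and f="Dom B \<phi>" and g="Cod B \<phi>" and \<phi>=\<phi>] unfolding hom1_def hom2_def by auto
lemma T2_arr[simp]: "X \<in> Ob B \<Longrightarrow> Y \<in> Ob B \<Longrightarrow> \<phi> \<in> Arr2 B \<Longrightarrow> Src B (Dom B \<phi>) = X \<Longrightarrow> Trg B (Dom B \<phi>) = WD W Y \<Longrightarrow>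
  WT2 W X Y \<phi> \<in> Arr2 B" using T2_all by blast
lemma T2_dom[simp]: "X \<in> Ob B \<Longrightarrow> Y \<in> Ob B \<Longrightarrow> \<phi> \<in> Arr2 B \<Longrightarrow> Src B (Dom B \<phi>) = X \<Longrightarrow> Trg B (Dom B \<phi>) = WD W Y \<Longrightarrow>
  Dom B (WT2 W X Y \<phi>) = WT W X Y (Dom B \<phi>)" using T2_all by blast
lemma T2_cod[simp]: "X \<in> Ob B \<Longrightarrow> Y \<in> Ob B \<Longrightarrow> \<phi> \<in> Arr2 B \<Longrightarrow> Src B (Dom B \<phi>) = X \<Longrightarrow> Trg B (Dom B \<phi>) = WD W Y \<Longrightarrow>
  Cod B (WT2 W X Y \<phi>) = WT W X Y (Cod B \<phi>)" using T2_all by blast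
lemma T2_id[simp]: "X \<in> Ob B \<Longrightarrow> Y \<in> Ob B \<Longrightarrow> f \<in> Arr1 B \<Longrightarrow> Src B f = X \<Longrightarrow> Trg B f = WD W Y \<Longrightarrow>
  WT2 W X Y (Id2 B f) = Id2 B (WT W X Y f)" using d4 unfolding hom1_def by blast
lemma T2_vc: "X \<in> Ob B \<Longrightarrow> Y \<in> Ob B \<Longrightarrow> \<phi> \<in> Arr2 B \<Longrightarrow> \<psi> \<in> Arr2 B \<Longrightarrow> Dom B \<psi> = Cod B \<phi> \<Longrightarrow>
  Src B (Dom B \<phi>) = X \<Longrightarrow> Trg B (Dom B \<phi>) = WD W Y \<Longrightarrow>
  WT2 W X Y (VComp B \<psi> \<phi>) = VComp B (WT2 W X Y \<psi>) (WT2 W X Y \<phi>)"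
  using d5[rule_format, where X=X and Y=Y and f="Dom B \<phi>" and g="Cod B \<phi>" and h="Cod B \<psi>" and \<phi>=\<phi> and \<psi>=\<psi>]
  unfolding hom1_def hom2_def by auto

lemma K_arr[simp]: "X \<in> Ob B \<Longrightarrow> WK W X \<in> Arr1 B" using d6 unfolding hom1_def by blast
lemma K_src[simp]: "X \<in> Ob B \<Longrightarrow> Src B (WK W X) = X" using d6 unfolding hom1_def by blast
lemma K_trg[simp]: "X \<in> Ob B \<Longrightarrow> Trg B (WK W X) = WD W X" using d6 unfolding hom1_def by blast

lemma v_all: "X \<in> Ob B \<Longrightarrow> Y \<in> Ob B \<Longrightarrow> Z \<in> Ob B \<Longrightarrow> f \<in> Arr1 B \<Longrightarrow> Src B f = X \<Longrightarrow> Trg B f = WD W Y \<Longrightarrow>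
  g \<in> Arr1 B \<Longrightarrow> Src B g = Y \<Longrightarrow> Trg B g = WD W Z \<Longrightarrow>
  Wv W X Y Z g f \<in> Arr2 B \<and> Dom B (Wv W X Y Z g f) = WT W X Z (HComp1 B (WT W Y Z g) f) \<and>
  Cod B (Wv W X Y Z g f) = HComp1 B (WT W Y Z g) (WT W X Y f)"
  using d7 unfolding hom1_def hom2_def by blast
lemma v_arr[simp]: "X \<in> Ob B \<Longrightarrow> Y \<in> Ob B \<Longrightarrow> Z \<in> Ob B \<Longrightarrow> f \<in> Arr1 B \<Longrightarrow> Src B f = X \<Longrightarrow> Trg B f = WD W Y \<Longrightarrow>
  g \<in> Arr1 B \<Longrightarrow> Src B g = Y \<Longrightarrow> Trg B g = WD W Z \<Longrightarrow> Wv W X Y Z g f \<in> Arr2 B" using v_all by blast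
lemma v_dom[simp]: "X \<in> Ob B \<Longrightarrow> Y \<in> Ob B \<Longrightarrow> Z \<in> Ob B \<Longrightarrow> f \<in> Arr1 B \<Longrightarrow> Src B f = X \<Longrightarrow> Trg B f = WD W Y \<Longrightarrow>
  g \<in> Arr1 B \<Longrightarrow> Src B g = Y \<Longrightarrow> Trg B g = WD W Z \<Longrightarrow> Dom B (Wv W X Y Z g f) = WT W X Z (HComp1 B (WT W Y Z g) f)"
  using v_all by blast
lemma v_cod[simp]: "X \<in> Ob B \<Longrightarrow> Y \<in> Ob B \<Longrightarrow> Z \<in> Ob B \<Longrightarrow> f \<in> Arr1 B \<Longrightarrow> Src B f = X \<Longrightarrow> Trg B f = WD W Y \<Longrightarrow>
  g \<in> Arr1 B \<Longrightarrow> Src B g = Y \<Longrightarrow> Trg B g = WD W Z \<Longrightarrow> Cod B (Wv W X Y Z g f) = HComp1 B (WT W Y Z g) (WT W X Y f)"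
  using v_all by blast
lemma v_nat: "X \<in> Ob B \<Longrightarrow> Y \<in> Ob B \<Longrightarrow> Z \<in> Ob B \<Longrightarrow> \<phi> \<in> Arr2 B \<Longrightarrow> \<psi> \<in> Arr2 B \<Longrightarrow>
  Src B (Dom B \<phi>) = X \<Longrightarrow> Trg B (Dom B \<phi>) = WD W Y \<Longrightarrow> Src B (Dom B \<psi>) = Y \<Longrightarrow> Trg B (Dom B \<psi>) = WD W Z \<Longrightarrow>
  VComp B (Wv W X Y Z (Cod B \<psi>) (Cod B \<phi>)) (WT2 W X Z (HComp2 B (WT2 W Y Z \<psi>) \<phi>))
  = VComp B (HComp2 B (WT2 W Y Z \<psi>) (WT2 W X Y \<phi>)) (Wv W X Y Z (Dom B \<psi>) (Dom B \<phi>))"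
  using d8[rule_format, where X=X and Y=Y and Z=Z and f="Dom B \<phi>" and f'="Cod B \<phi>" and g="Dom B \<psi>" and g'="Cod B \<psi>"
     and \<phi>=\<phi> and \<psi>=\<psi>] unfolding hom1_def hom2_def by auto

lemma k_all: "X \<in> Ob B \<Longrightarrow> Y \<in> Ob B \<Longrightarrow> f \<in> Arr1 B \<Longrightarrow> Src B f = X \<Longrightarrow> Trg B f = WD W Y \<Longrightarrow>
  Wk W X Y f \<in> Arr2 B \<and> Dom B (Wk W X Y f) = f \<and> Cod B (Wk W X Y f) = HComp1 B (WT W X Y f) (WK W X)"
  using d9 unfolding hom1_def hom2_def by blast
lemma k_arr[simp]: "X \<in> Ob B \<Longrightarrow> Y \<in> Ob B \<Longrightarrow> f \<in> Arr1 B \<Longrightarrow> Src B f = X \<Longrightarrow> Trg B f = WD W Y \<Longrightarrow>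
  Wk W X Y f \<in> Arr2 B" using k_all by blast
lemma k_dom[simp]: "X \<in> Ob B \<Longrightarrow> Y \<in> Ob B \<Longrightarrow> f \<in> Arr1 B \<Longrightarrow> Src B f = X \<Longrightarrow> Trg B f = WD W Y \<Longrightarrow>
  Dom B (Wk W X Y f) = f" using k_all by blast
lemma k_cod[simp]: "X \<in> Ob B \<Longrightarrow> Y \<in> Ob B \<Longrightarrow> f \<in> Arr1 B \<Longrightarrow> Src B f = X \<Longrightarrow> Trg B f = WD W Y \<Longrightarrow>
  Cod B (Wk W X Y f) = HComp1 B (WT W X Y f) (WK W X)" using k_all by blast
lemma k_nat: "X \<in> Ob B \<Longrightarrow> Y \<in> Ob B \<Longrightarrow> \<phi> \<in> Arr2 B \<Longrightarrow> Src B (Dom B \<phi>) = X \<Longrightarrow> Trg B (Dom B \<phi>) = WD W Y \<Longrightarrow>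
  VComp B (Wk W X Y (Cod B \<phi>)) \<phi> = VComp B (HComp2 B (WT2 W X Y \<phi>) (Id2 B (WK W X))) (Wk W X Y (Dom B \<phi>))"
  using d10[rule_format, where X=X and Y=Y and f="Dom B \<phi>" and f'="Cod B \<phi>" and \<phi>=\<phi>] unfolding hom1_def hom2_def wl_def by auto

lemma v0_arr[simp]: "Y \<in> Ob B \<Longrightarrow> Wv0 W Y \<in> Arr2 B" using d11 unfolding hom2_def by blast
lemma v0_dom[simp]: "Y \<in> Ob B \<Longrightarrow> Dom B (Wv0 W Y) = WT W Y Y (WK W Y)" using d11 unfolding hom2_def by blast
lemma v0_cod[simp]: "Y \<in> Ob B \<Longrightarrow> Cod B (Wv0 W Y) = Id1 B (WD W Y)" using d11 unfolding hom2_def by blast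

lemma alpha_inv[simp]: "f \<in> Arr1 B \<Longrightarrow> g \<in> Arr1 B \<Longrightarrow> h \<in> Arr1 B \<Longrightarrow> Trg B f = Src B g \<Longrightarrow> Trg B g = Src B h \<Longrightarrow>
  invertible2 B (Alpha B f g h)" using bic unfolding bicategory_def by blast
lemma lam_inv[simp]: "f \<in> Arr1 B \<Longrightarrow> invertible2 B (Lam B f)" using bic unfolding bicategory_def by blast
lemma rho_inv[simp]: "f \<in> Arr1 B \<Longrightarrow> invertible2 B (Rho B f)" using bic unfolding bicategory_def by blast
lemma v_inv[simp]: "X \<in> Ob B \<Longrightarrow> Y \<in> Ob B \<Longrightarrow> Z \<in> Ob B \<Longrightarrow> f \<in> Arr1 B \<Longrightarrow> Src B f = X \<Longrightarrow> Trg B f = WD W Y \<Longrightarrow>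
  g \<in> Arr1 B \<Longrightarrow> Src B g = Y \<Longrightarrow> Trg B g = WD W Z \<Longrightarrow> invertible2 B (Wv W X Y Z g f)"
  using wi unfolding warping_invertible_def hom1_def by blast
lemma k_inv[simp]: "X \<in> Ob B \<Longrightarrow> Y \<in> Ob B \<Longrightarrow> f \<in> Arr1 B \<Longrightarrow> Src B f = X \<Longrightarrow> Trg B f = WD W Y \<Longrightarrow>
  invertible2 B (Wk W X Y f)" using wi unfolding warping_invertible_def hom1_def by blast
lemma v0_inv[simp]: "Y \<in> Ob B \<Longrightarrow> invertible2 B (Wv0 W Y)" using wi unfolding warping_invertible_def by blast

definition inv2 where "inv2 \<phi> = (SOME \<psi>. \<psi> \<in> hom2 B (Cod B \<phi>) (Dom B \<phi>) \<and>
        VComp B \<psi> \<phi> = Id2 B (Dom B \<phi>) \<and> VComp B \<phi> \<psi> = Id2 B (Cod B \<phi>))"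

lemma inv2_all: "invertible2 B \<phi> \<Longrightarrow> inv2 \<phi> \<in> hom2 B (Cod B \<phi>) (Dom B \<phi>) \<and>
        VComp B (inv2 \<phi>) \<phi> = Id2 B (Dom B \<phi>) \<and> VComp B \<phi> (inv2 \<phi>) = Id2 B (Cod B \<phi>)"
  unfolding inv2_def invertible2_def by (rule someI_ex) blast
lemma invertible_arr: "invertible2 B \<phi> \<Longrightarrow> \<phi> \<in> Arr2 B" unfolding invertible2_def by blast
lemma inv2_arr[simp]: "invertible2 B \<phi> \<Longrightarrow> inv2 \<phi> \<in> Arr2 B" using inv2_all unfolding hom2_def by blast
lemma inv2_dom[simp]: "invertible2 B \<phi> \<Longrightarrow> Dom B (inv2 \<phi>) = Cod B \<phi>" using inv2_all unfolding hom2_def by blast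
lemma inv2_cod[simp]: "invertible2 B \<phi> \<Longrightarrow> Cod B (inv2 \<phi>) = Dom B \<phi>" using inv2_all unfolding hom2_def by blast
lemma inv2_l[simp]: "invertible2 B \<phi> \<Longrightarrow> VComp B (inv2 \<phi>) \<phi> = Id2 B (Dom B \<phi>)" using inv2_all by blast
lemma inv2_r[simp]: "invertible2 B \<phi> \<Longrightarrow> VComp B \<phi> (inv2 \<phi>) = Id2 B (Cod B \<phi>)" using inv2_all by blast

lemma inv2_l'[simp]: "invertible2 B \<phi> \<Longrightarrow> x \<in> Arr2 B \<Longrightarrow> Cod B x = Dom B \<phi> \<Longrightarrow> VComp B (inv2 \<phi>) (VComp B \<phi> x) = x"
  using invertible_arr[of \<phi>] by (simp flip: vc_assoc)
lemma inv2_r'[simp]: "invertible2 B \<phi> \<Longrightarrow> x \<in> Arr2 B \<Longrightarrow> Cod B x = Cod B \<phi> \<Longrightarrow> VComp B \<phi> (VComp B (inv2 \<phi>) x) = x"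
  using invertible_arr[of \<phi>] by (simp flip: vc_assoc)

lemma mono_cancel: assumes "invertible2 B \<phi>" "x \<in> Arr2 B" "y \<in> Arr2 B" "Cod B x = Dom B \<phi>" "Cod B y = Dom B \<phi>"
   "VComp B \<phi> x = VComp B \<phi> y" shows "x = y"
proof -
  have "x = VComp B (inv2 \<phi>) (VComp B \<phi> x)" using assms(1,2,4) by simp
  also have "\<dots> = VComp B (inv2 \<phi>) (VComp B \<phi> y)" using assms(6) by simp
  also have "\<dots> = y" using assms(1,3,5) by simp
  finally show ?thesis .
qed
lemma epi_cancel: assumes "invertible2 B \<phi>" "x \<in> Arr2 B" "y \<in> Arr2 B" "Dom B x = Cod B \<phi>" "Dom B y = Cod B \<phi>"
   "VComp B x \<phi> = VComp B y \<phi>" shows "x = y"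
proof -
  have a: "\<phi> \<in> Arr2 B" using assms(1) invertible_arr by blast
  have "x = VComp B (VComp B x \<phi>) (inv2 \<phi>)" using assms(1,2,4) a by simp
  also have "\<dots> = VComp B (VComp B y \<phi>) (inv2 \<phi>)" using assms(6) by simp
  also have "\<dots> = y" using assms(1,3,5) a by simp
  finally show ?thesis .
qed

lemma inv_vc[simp]: assumes "invertible2 B \<phi>" "invertible2 B \<psi>" "Dom B \<psi> = Cod B \<phi>"
  shows "invertible2 B (VComp B \<psi> \<phi>)"
proof -
  have a: "\<phi> \<in> Arr2 B" "\<psi> \<in> Arr2 B" using assms invertible_arr by blast+
  have "VComp B (VComp B (inv2 \<phi>) (inv2 \<psi>)) (VComp B \<psi> \<phi>) = Id2 B (Dom B \<phi>)"
    using assms a by simp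
  moreover have "VComp B (VComp B \<psi> \<phi>) (VComp B (inv2 \<phi>) (inv2 \<psi>)) = Id2 B (Cod B \<psi>)"
    using assms a by simp
  ultimately show ?thesis unfolding invertible2_def hom2_def using assms a
    by (intro conjI bexI[of _ "VComp B (inv2 \<phi>) (inv2 \<psi>)"]) auto
qed
lemma inv_id2[simp]: "f \<in> Arr1 B \<Longrightarrow> invertible2 B (Id2 B f)"
  unfolding invertible2_def hom2_def by (intro conjI bexI[of _ "Id2 B f"]) auto
lemma inv_hc2[simp]: assumes "invertible2 B \<phi>" "invertible2 B \<psi>" "Trg B (Dom B \<phi>) = Src B (Dom B \<psi>)"
  shows "invertible2 B (HComp2 B \<psi> \<phi>)"
proof -
  have a: "\<phi> \<in> Arr2 B" "\<psi> \<in> Arr2 B" using assms invertible_arr by blast+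
  have "VComp B (HComp2 B (inv2 \<psi>) (inv2 \<phi>)) (HComp2 B \<psi> \<phi>) = Id2 B (Dom B (HComp2 B \<psi> \<phi>))"
    using assms a by (simp add: interchange[symmetric])
  moreover have "VComp B (HComp2 B \<psi> \<phi>) (HComp2 B (inv2 \<psi>) (inv2 \<phi>)) = Id2 B (Cod B (HComp2 B \<psi> \<phi>))"
    using assms a by (simp add: interchange[symmetric])
  ultimately show ?thesis unfolding invertible2_def hom2_def using assms a
    by (intro conjI bexI[of _ "HComp2 B (inv2 \<psi>) (inv2 \<phi>)"]) auto
qed
lemma inv_T2[simp]: assumes "invertible2 B \<phi>" "X \<in> Ob B" "Y \<in> Ob B" "Src B (Dom B \<phi>) = X" "Trg B (Dom B \<phi>) = WD W Y"
  shows "invertible2 B (WT2 W X Y \<phi>)"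
proof -
  have a: "\<phi> \<in> Arr2 B" using assms invertible_arr by blast+
  have "VComp B (WT2 W X Y (inv2 \<phi>)) (WT2 W X Y \<phi>) = Id2 B (Dom B (WT2 W X Y \<phi>))"
    using assms a by (simp add: T2_vc[symmetric])
  moreover have "VComp B (WT2 W X Y \<phi>) (WT2 W X Y (inv2 \<phi>)) = Id2 B (Cod B (WT2 W X Y \<phi>))"
    using assms a by (simp add: T2_vc[symmetric])
  ultimately show ?thesis unfolding invertible2_def hom2_def using assms a
    by (intro conjI bexI[of _ "WT2 W X Y (inv2 \<phi>)"]) auto
qed


lemma T_faithful: assumes "X \<in> Ob B" "Y \<in> Ob B" "\<phi> \<in> Arr2 B" "\<psi> \<in> Arr2 B" "Dom B \<psi> = Dom B \<phi>"
  "Cod B \<psi> = Cod B \<phi>" "Src B (Dom B \<phi>) = X" "Trg B (Dom B \<phi>) = WD W Y" "WT2 W X Y \<phi> = WT2 W X Y \<psi>"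
  shows "\<phi> = \<psi>"
proof -
  have e1: "VComp B (Wk W X Y (Cod B \<phi>)) \<phi> = VComp B (HComp2 B (WT2 W X Y \<phi>) (Id2 B (WK W X))) (Wk W X Y (Dom B \<phi>))"
    by (rule k_nat) (simp_all add: assms)
  have e2: "VComp B (Wk W X Y (Cod B \<psi>)) \<psi> = VComp B (HComp2 B (WT2 W X Y \<psi>) (Id2 B (WK W X))) (Wk W X Y (Dom B \<psi>))"
    by (rule k_nat) (simp_all add: assms)
  have "VComp B (Wk W X Y (Cod B \<phi>)) \<phi> = VComp B (Wk W X Y (Cod B \<phi>)) \<psi>"
    using e1 e2 unfolding assms(5,6,9) by simp
  from mono_cancel[OF _ _ _ _ _ this] show ?thesis using assms by simp
qed

lemma hc_split1: "\<phi> \<in> Arr2 B \<Longrightarrow> \<psi> \<in> Arr2 B \<Longrightarrow> Trg B (Dom B \<phi>) = Src B (Dom B \<psi>) \<Longrightarrow>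
  VComp B (HComp2 B (Id2 B (Cod B \<psi>)) \<phi>) (HComp2 B \<psi> (Id2 B (Dom B \<phi>))) = HComp2 B \<psi> \<phi>"
  by (subst interchange[symmetric]) simp_all
lemma hc_split2: "\<phi> \<in> Arr2 B \<Longrightarrow> \<psi> \<in> Arr2 B \<Longrightarrow> Trg B (Dom B \<phi>) = Src B (Dom B \<psi>) \<Longrightarrow>
  VComp B (HComp2 B \<psi> (Id2 B (Cod B \<phi>))) (HComp2 B (Id2 B (Dom B \<psi>)) \<phi>) = HComp2 B \<psi> \<phi>"
  by (subst interchange[symmetric]) simp_all
end

locale ctx2 = ctx + assumes w1: "W1 B W" and w2: "W2 B W"
begin

lemma W1': assumes "X \<in> Ob B" "Y \<in> Ob B" "Z \<in> Ob B" "V \<in> Ob B"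
  "f \<in> Arr1 B" "Src B f = X" "Trg B f = WD W Y" "g \<in> Arr1 B" "Src B g = Y" "Trg B g = WD W Z"
  "h \<in> Arr1 B" "Src B h = Z" "Trg B h = WD W V"
shows "VComp B (Alpha B (WT W X Y f) (WT W Y Z g) (WT W Z V h))
       (VComp B (HComp2 B (Wv W Y Z V h g) (Id2 B (WT W X Y f))) (Wv W X Y V (HComp1 B (WT W Z V h) g) f))
     = VComp B (HComp2 B (Id2 B (WT W Z V h)) (Wv W X Y Z g f))
        (VComp B (Wv W X Z V h (HComp1 B (WT W Y Z g) f))
          (VComp B (WT2 W X V (Alpha B f (WT W Y Z g) (WT W Z V h)))
             (WT2 W X V (HComp2 B (Wv W Y Z V h g) (Id2 B f)))))"
proof -
  have "f \<in> hom1 B X (WD W Y)" "g \<in> hom1 B Y (WD W Z)" "h \<in> hom1 B Z (WD W V)" using assms unfolding hom1_def by auto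
  from w1[unfolded W1_def Let_def, rule_format, OF assms(1-4) this] show ?thesis unfolding wl_def wr_def .
qed

lemma W2': assumes "X \<in> Ob B" "Y \<in> Ob B" "f \<in> Arr1 B" "Src B f = X" "Trg B f = WD W Y"
shows "VComp B (HComp2 B (Id2 B (WT W X Y f)) (Wv0 W X))
       (VComp B (Wv W X X Y f (WK W X)) (WT2 W X Y (Wk W X Y f)))
     = Rho B (WT W X Y f)"
proof -
  have "f \<in> hom1 B X (WD W Y)" using assms unfolding hom1_def by auto
  from w2[unfolded W2_def, rule_format, OF assms(1-2) this] show ?thesis unfolding wl_def wr_def .
qed


lemma wr_merge: "x \<in> Arr2 B \<Longrightarrow> y \<in> Arr2 B \<Longrightarrow> Dom B x = Cod B y \<Longrightarrow> g \<in> Arr1 B \<Longrightarrow> Trg B (Dom B y) = Src B g \<Longrightarrow>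
  VComp B (HComp2 B (Id2 B g) x) (HComp2 B (Id2 B g) y) = HComp2 B (Id2 B g) (VComp B x y)"
  by (subst interchange[symmetric]) simp_all
lemma wr_merge3: "x \<in> Arr2 B \<Longrightarrow> y \<in> Arr2 B \<Longrightarrow> Dom B x = Cod B y \<Longrightarrow> g \<in> Arr1 B \<Longrightarrow> Trg B (Dom B y) = Src B g \<Longrightarrow>
  z \<in> Arr2 B \<Longrightarrow> Cod B z = HComp1 B g (Dom B y) \<Longrightarrow>
  VComp B (HComp2 B (Id2 B g) x) (VComp B (HComp2 B (Id2 B g) y) z) = VComp B (HComp2 B (Id2 B g) (VComp B x y)) z"
  by (simp flip: vc_assoc add: wr_merge)

lemma W4_pt: assumes ob: "X \<in> Ob B" "Y \<in> Ob B" "Z \<in> Ob B"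
  and f: "f \<in> Arr1 B" "Src B f = X" "Trg B f = WD W Y" and g: "g \<in> Arr1 B" "Src B g = Y" "Trg B g = WD W Z"
shows "VComp B (Alpha B (WK W X) (WT W X Y f) (WT W Y Z g))
       (VComp B (HComp2 B (Wv W X Y Z g f) (Id2 B (WK W X))) (Wk W X Z (HComp1 B (WT W Y Z g) f)))
     = HComp2 B (Id2 B (WT W Y Z g)) (Wk W X Y f)" (is "?L = ?R")
proof -
  let ?Tf = "WT W X Y f"
  let ?Tg = "WT W Y Z g"
  let ?K = "WK W X"
  let ?TK = "WT W X X (WK W X)"
  let ?gf = "HComp1 B (WT W Y Z g) f"
  let ?Tgf = "WT W X Z ?gf"
  let ?v = "Wv W X Y Z g f"
  let ?one = "Id1 B (WD W X)"
  let ?vz = "Wv0 W X"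
  let ?Pa = "HComp2 B (Id2 B ?Tg) (HComp2 B (Id2 B ?Tf) ?vz)"
  let ?Pb = "HComp2 B (Id2 B ?Tg) (Wv W X X Y f ?K)"
  let ?vTK = "Wv W X Y Z g (HComp1 B ?Tf ?K)"
  let ?M = "VComp B ?Pa (VComp B ?Pb ?vTK)"
  let ?k = "Wk W X Z ?gf"
  let ?vK = "Wv W X X Z ?gf ?K"
  note fx = ob f g
  have Minv: "invertible2 B ?M" using fx by simp
  have a1: "VComp B ?vTK (WT2 W X Z ?R) = VComp B (HComp2 B (Id2 B ?Tg) (WT2 W X Y (Wk W X Y f))) ?v"
    using v_nat[of X Y Z "Wk W X Y f" "Id2 B g"] fx by simp
  have a2: "VComp B ?M (WT2 W X Z ?R) = VComp B ?Pa (VComp B ?Pb (VComp B (HComp2 B (Id2 B ?Tg) (WT2 W X Y (Wk W X Y f))) ?v))"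
    using a1 fx by simp
  have a3: "VComp B ?M (WT2 W X Z ?R) = VComp B (HComp2 B (Id2 B ?Tg) (Rho B ?Tf)) ?v"
    unfolding a2 using fx W2'[of X Y f] by (simp add: wr_merge wr_merge3)
  have b1: "VComp B (Alpha B ?TK ?Tf ?Tg) (VComp B (HComp2 B ?v (Id2 B ?TK)) ?vK)
     = VComp B ?Pb (VComp B ?vTK (VComp B (WT2 W X Z (Alpha B ?K ?Tf ?Tg)) (WT2 W X Z (HComp2 B ?v (Id2 B ?K)))))"
    using W1'[of X X Y Z ?K f g] fx by simp
  have b2: "VComp B ?M (WT2 W X Z ?L) = VComp B ?Pa (VComp B (Alpha B ?TK ?Tf ?Tg) (VComp B (HComp2 B ?v (Id2 B ?TK)) (VComp B ?vK (WT2 W X Z ?k))))"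
    using arg_cong[OF b1, of "\<lambda>x. VComp B ?Pa (VComp B x (WT2 W X Z ?k))"] fx by (simp add: T2_vc)
  have c1: "VComp B (Alpha B ?one ?Tf ?Tg) (HComp2 B (Id2 B (HComp1 B ?Tg ?Tf)) ?vz) = VComp B ?Pa (Alpha B ?TK ?Tf ?Tg)"
    using alpha_nat[of ?vz "Id2 B ?Tf" "Id2 B ?Tg"] fx by simp
  have c2: "VComp B (HComp2 B (Id2 B (HComp1 B ?Tg ?Tf)) ?vz) (HComp2 B ?v (Id2 B ?TK))
     = VComp B (HComp2 B ?v (Id2 B ?one)) (HComp2 B (Id2 B ?Tgf) ?vz)"
    using hc_split1[of ?vz ?v] hc_split2[of ?vz ?v] fx by simp
  have c3: "VComp B (HComp2 B (Id2 B ?Tgf) ?vz) (VComp B ?vK (WT2 W X Z ?k)) = Rho B ?Tgf"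
    using W2'[of X Z ?gf] fx by simp
  have c4: "VComp B (HComp2 B ?v (Id2 B ?one)) (Rho B ?Tgf) = VComp B (Rho B (HComp1 B ?Tg ?Tf)) ?v"
    using rho_nat[of ?v] fx by simp
  have c5: "VComp B (Alpha B ?one ?Tf ?Tg) (Rho B (HComp1 B ?Tg ?Tf)) = HComp2 B (Id2 B ?Tg) (Rho B ?Tf)"
    using B4[of ?Tf ?Tg] fx by simp
  have b3: "VComp B ?M (WT2 W X Z ?L) = VComp B (Alpha B ?one ?Tf ?Tg) (VComp B (HComp2 B (Id2 B (HComp1 B ?Tg ?Tf)) ?vz) (VComp B (HComp2 B ?v (Id2 B ?TK)) (VComp B ?vK (WT2 W X Z ?k))))"
    unfolding b2 using arg_cong[OF c1, of "\<lambda>x. VComp B x (VComp B (HComp2 B ?v (Id2 B ?TK)) (VComp B ?vK (WT2 W X Z ?k)))"] fx by simp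
  have b4: "VComp B ?M (WT2 W X Z ?L) = VComp B (Alpha B ?one ?Tf ?Tg) (VComp B (HComp2 B ?v (Id2 B ?one)) (VComp B (HComp2 B (Id2 B ?Tgf) ?vz) (VComp B ?vK (WT2 W X Z ?k))))"
    unfolding b3 using arg_cong[OF c2, of "\<lambda>x. VComp B (Alpha B ?one ?Tf ?Tg) (VComp B x (VComp B ?vK (WT2 W X Z ?k)))"] fx by simp
  have b5: "VComp B ?M (WT2 W X Z ?L) = VComp B (HComp2 B (Id2 B ?Tg) (Rho B ?Tf)) ?v"
    unfolding b4 c3 using arg_cong[OF c4, of "\<lambda>x. VComp B (Alpha B ?one ?Tf ?Tg) x"] arg_cong[OF c5, of "\<lambda>x. VComp B x ?v"] fx by simp
  have "WT2 W X Z ?L = WT2 W X Z ?R"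
    using mono_cancel[OF Minv _ _ _ _ trans[OF b5 a3[symmetric]]] fx by simp
  then show ?thesis using T_faithful[of X Z ?L ?R] fx by simp
qed


lemma wl_merge: "x \<in> Arr2 B \<Longrightarrow> y \<in> Arr2 B \<Longrightarrow> Dom B x = Cod B y \<Longrightarrow> u \<in> Arr1 B \<Longrightarrow> Trg B u = Src B (Dom B y) \<Longrightarrow>
  VComp B (HComp2 B x (Id2 B u)) (HComp2 B y (Id2 B u)) = HComp2 B (VComp B x y) (Id2 B u)"
  by (subst interchange[symmetric]) simp_all
lemma wl_merge3: "x \<in> Arr2 B \<Longrightarrow> y \<in> Arr2 B \<Longrightarrow> Dom B x = Cod B y \<Longrightarrow> u \<in> Arr1 B \<Longrightarrow> Trg B u = Src B (Dom B y) \<Longrightarrow>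
  z \<in> Arr2 B \<Longrightarrow> Cod B z = HComp1 B (Dom B y) u \<Longrightarrow>
  VComp B (HComp2 B x (Id2 B u)) (VComp B (HComp2 B y (Id2 B u)) z) = VComp B (HComp2 B (VComp B x y) (Id2 B u)) z"
  by (simp flip: vc_assoc add: wl_merge)

lemma Elem: assumes Y: "Y \<in> Ob B" and u: "u \<in> Arr1 B" "Trg B u = WD W Y"
  shows "VComp B (HComp2 B (Id2 B (WT W Y Y (WK W Y))) (Lam B u))
    (VComp B (HComp2 B (Id2 B (WT W Y Y (WK W Y))) (HComp2 B (Wv0 W Y) (Id2 B u)))
    (VComp B (Alpha B u (WT W Y Y (WK W Y)) (WT W Y Y (WK W Y)))
    (VComp B (HComp2 B (Wv W Y Y Y (WK W Y) (WK W Y)) (Id2 B u))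
      (HComp2 B (WT2 W Y Y (Wk W Y Y (WK W Y))) (Id2 B u)))))
   = Id2 B (HComp1 B (WT W Y Y (WK W Y)) u)"
proof -
  let ?TK = "WT W Y Y (WK W Y)"
  let ?vz = "Wv0 W Y"
  let ?one = "Id1 B (WD W Y)"
  let ?vKK = "Wv W Y Y Y (WK W Y) (WK W Y)"
  let ?kh = "WT2 W Y Y (Wk W Y Y (WK W Y))"
  note fx = Y u
  have e1: "VComp B (Alpha B u ?one ?TK) (HComp2 B (HComp2 B (Id2 B ?TK) ?vz) (Id2 B u))
      = VComp B (HComp2 B (Id2 B ?TK) (HComp2 B ?vz (Id2 B u))) (Alpha B u ?TK ?TK)"
    using alpha_nat[of "Id2 B u" ?vz "Id2 B ?TK"] fx by simp
  have e2: "VComp B (HComp2 B (HComp2 B (Id2 B ?TK) ?vz) (Id2 B u)) (VComp B (HComp2 B ?vKK (Id2 B u)) (HComp2 B ?kh (Id2 B u)))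
     = HComp2 B (Rho B ?TK) (Id2 B u)"
    using W2'[of Y Y "WK W Y"] fx by (simp add: wl_merge wl_merge3)
  have e3: "VComp B (HComp2 B (Id2 B ?TK) (Lam B u)) (VComp B (Alpha B u ?one ?TK) (HComp2 B (Rho B ?TK) (Id2 B u))) = Id2 B (HComp1 B ?TK u)"
    using B2[of u ?TK] fx by simp
  show ?thesis
    using arg_cong[OF e1, of "\<lambda>x. VComp B (HComp2 B (Id2 B ?TK) (Lam B u)) (VComp B x (VComp B (HComp2 B ?vKK (Id2 B u)) (HComp2 B ?kh (Id2 B u))))"]
     e2 e3 fx by simp
qed

lemma TK_faithful: assumes Y: "Y \<in> Ob B" and th: "\<theta> \<in> Arr2 B" "\<theta>' \<in> Arr2 B" "Dom B \<theta>' = Dom B \<theta>" "Cod B \<theta>' = Cod B \<theta>"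
  "Trg B (Dom B \<theta>) = WD W Y" and eq: "HComp2 B (Id2 B (WT W Y Y (WK W Y))) \<theta> = HComp2 B (Id2 B (WT W Y Y (WK W Y))) \<theta>'"
  shows "\<theta> = \<theta>'"
proof -
  let ?TK = "WT W Y Y (WK W Y)"
  let ?vz = "Wv0 W Y"
  let ?one = "Id1 B (WD W Y)"
  have n1: "VComp B (HComp2 B (Id2 B ?one) \<theta>) (HComp2 B ?vz (Id2 B (Dom B \<theta>)))
     = VComp B (HComp2 B ?vz (Id2 B (Cod B \<theta>))) (HComp2 B (Id2 B ?TK) \<theta>)"
    using hc_split1[of \<theta> ?vz] hc_split2[of \<theta> ?vz] Y th by simp
  have n2: "VComp B (HComp2 B (Id2 B ?one) \<theta>') (HComp2 B ?vz (Id2 B (Dom B \<theta>)))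
     = VComp B (HComp2 B ?vz (Id2 B (Cod B \<theta>))) (HComp2 B (Id2 B ?TK) \<theta>')"
    using hc_split1[of \<theta>' ?vz] hc_split2[of \<theta>' ?vz] Y th by simp
  have "VComp B (HComp2 B (Id2 B ?one) \<theta>) (HComp2 B ?vz (Id2 B (Dom B \<theta>)))
      = VComp B (HComp2 B (Id2 B ?one) \<theta>') (HComp2 B ?vz (Id2 B (Dom B \<theta>)))"
    unfolding n1 n2 eq ..
  from epi_cancel[OF _ _ _ _ _ this]
  have h1: "HComp2 B (Id2 B ?one) \<theta> = HComp2 B (Id2 B ?one) \<theta>'" using Y th by simp
  have l1: "VComp B \<theta> (Lam B (Dom B \<theta>)) = VComp B (Lam B (Cod B \<theta>)) (HComp2 B (Id2 B ?one) \<theta>)"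
    using lam_nat[of \<theta>] th by simp
  have l2: "VComp B \<theta>' (Lam B (Dom B \<theta>)) = VComp B (Lam B (Cod B \<theta>)) (HComp2 B (Id2 B ?one) \<theta>')"
    using lam_nat[of \<theta>'] th by simp
  have "VComp B \<theta> (Lam B (Dom B \<theta>)) = VComp B \<theta>' (Lam B (Dom B \<theta>))"
    unfolding l1 l2 h1 ..
  from epi_cancel[OF _ _ _ _ _ this] show ?thesis using th by simp
qed


lemma W3_pt: assumes ob: "X \<in> Ob B" "Y \<in> Ob B"
  and f: "f \<in> Arr1 B" "Src B f = X" "Trg B f = WD W Y"
shows "VComp B (Lam B (WT W X Y f))
       (VComp B (HComp2 B (Wv0 W Y) (Id2 B (WT W X Y f))) (Wv W X Y Y (WK W Y) f))
     = VComp B (WT2 W X Y (Lam B f)) (WT2 W X Y (HComp2 B (Wv0 W Y) (Id2 B f)))" (is "?A = ?Bc")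
proof -
  let ?Tf = "WT W X Y f"
  let ?K = "WK W Y"
  let ?TK = "WT W Y Y (WK W Y)"
  let ?vz = "Wv0 W Y"
  let ?one = "Id1 B (WD W Y)"
  let ?vKK = "Wv W Y Y Y ?K ?K"
  let ?kh = "WT2 W Y Y (Wk W Y Y ?K)"
  let ?vKf = "Wv W X Y Y ?K f"
  let ?P = "WT2 W X Y (HComp2 B ?kh (Id2 B f))"
  let ?Q = "VComp B (Wv W X Y Y ?K (HComp1 B ?TK f)) (VComp B (WT2 W X Y (Alpha B f ?TK ?TK))
              (VComp B (WT2 W X Y (HComp2 B ?vKK (Id2 B f))) ?P))"
  note fx = ob f
  have Qinv: "invertible2 B ?Q" using fx by simp
  have w1i: "VComp B (Alpha B ?Tf ?TK ?TK) (VComp B (HComp2 B ?vKK (Id2 B ?Tf)) (Wv W X Y Y (HComp1 B ?TK ?K) f))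
     = VComp B (HComp2 B (Id2 B ?TK) ?vKf) (VComp B (Wv W X Y Y ?K (HComp1 B ?TK f))
          (VComp B (WT2 W X Y (Alpha B f ?TK ?TK)) (WT2 W X Y (HComp2 B ?vKK (Id2 B f)))))"
    using W1'[of X Y Y Y f ?K ?K] fx by simp
  have p1: "VComp B (Wv W X Y Y (HComp1 B ?TK ?K) f) ?P = VComp B (HComp2 B ?kh (Id2 B ?Tf)) ?vKf"
    using v_nat[of X Y Y "Id2 B f" "Wk W Y Y ?K"] fx by simp
  have L1: "VComp B (HComp2 B (Id2 B ?TK) ?A) ?Q = VComp B (HComp2 B (Id2 B ?TK) (Lam B ?Tf))
     (VComp B (HComp2 B (Id2 B ?TK) (HComp2 B ?vz (Id2 B ?Tf))) (VComp B (HComp2 B (Id2 B ?TK) ?vKf) ?Q))"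
    using fx by (simp add: wr_merge wr_merge3)
  have L2: "VComp B (HComp2 B (Id2 B ?TK) ?A) ?Q = VComp B (HComp2 B (Id2 B ?TK) (Lam B ?Tf))
     (VComp B (HComp2 B (Id2 B ?TK) (HComp2 B ?vz (Id2 B ?Tf))) (VComp B (Alpha B ?Tf ?TK ?TK)
       (VComp B (HComp2 B ?vKK (Id2 B ?Tf)) (VComp B (Wv W X Y Y (HComp1 B ?TK ?K) f) ?P))))"
    unfolding L1 using arg_cong[OF w1i, of "\<lambda>x. VComp B (HComp2 B (Id2 B ?TK) (Lam B ?Tf))
     (VComp B (HComp2 B (Id2 B ?TK) (HComp2 B ?vz (Id2 B ?Tf))) (VComp B x ?P))"] fx by simp
  have L3: "VComp B (HComp2 B (Id2 B ?TK) ?A) ?Q = ?vKf"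
    unfolding L2 using p1 Elem[of Y ?Tf, THEN arg_cong, of "\<lambda>x. VComp B x ?vKf"] fx by simp
  have r2: "VComp B (Wv W X Y Y ?K (HComp1 B ?one f)) (WT2 W X Y (HComp2 B (Id2 B ?TK) (HComp2 B ?vz (Id2 B f))))
     = VComp B (HComp2 B (Id2 B ?TK) (WT2 W X Y (HComp2 B ?vz (Id2 B f)))) (Wv W X Y Y ?K (HComp1 B ?TK f))"
    using v_nat[of X Y Y "HComp2 B ?vz (Id2 B f)" "Id2 B ?K"] fx by simp
  have r3: "VComp B ?vKf (WT2 W X Y (HComp2 B (Id2 B ?TK) (Lam B f)))
     = VComp B (HComp2 B (Id2 B ?TK) (WT2 W X Y (Lam B f))) (Wv W X Y Y ?K (HComp1 B ?one f))"
    using v_nat[of X Y Y "Lam B f" "Id2 B ?K"] fx by simp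
  have r4: "WT2 W X Y (VComp B (HComp2 B (Id2 B ?TK) (Lam B f))
    (VComp B (HComp2 B (Id2 B ?TK) (HComp2 B ?vz (Id2 B f)))
    (VComp B (Alpha B f ?TK ?TK) (VComp B (HComp2 B ?vKK (Id2 B f)) (HComp2 B ?kh (Id2 B f))))))
    = Id2 B (WT W X Y (HComp1 B ?TK f))"
    using Elem[of Y f] fx by simp
  have R1: "VComp B (HComp2 B (Id2 B ?TK) ?Bc) ?Q = VComp B (HComp2 B (Id2 B ?TK) (WT2 W X Y (Lam B f)))
      (VComp B (HComp2 B (Id2 B ?TK) (WT2 W X Y (HComp2 B ?vz (Id2 B f)))) ?Q)"
    using fx by (simp add: wr_merge wr_merge3)
  have R2: "VComp B (HComp2 B (Id2 B ?TK) ?Bc) ?Q = VComp B ?vKf (VComp B (WT2 W X Y (HComp2 B (Id2 B ?TK) (Lam B f)))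
     (VComp B (WT2 W X Y (HComp2 B (Id2 B ?TK) (HComp2 B ?vz (Id2 B f))))
       (VComp B (WT2 W X Y (Alpha B f ?TK ?TK)) (VComp B (WT2 W X Y (HComp2 B ?vKK (Id2 B f))) ?P))))"
    unfolding R1
    using arg_cong[OF r2, of "\<lambda>x. VComp B (HComp2 B (Id2 B ?TK) (WT2 W X Y (Lam B f))) (VComp B x
          (VComp B (WT2 W X Y (Alpha B f ?TK ?TK)) (VComp B (WT2 W X Y (HComp2 B ?vKK (Id2 B f))) ?P)))"]
      arg_cong[OF r3, of "\<lambda>x. VComp B x (VComp B (WT2 W X Y (HComp2 B (Id2 B ?TK) (HComp2 B ?vz (Id2 B f))))
       (VComp B (WT2 W X Y (Alpha B f ?TK ?TK)) (VComp B (WT2 W X Y (HComp2 B ?vKK (Id2 B f))) ?P)))"]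
      fx by simp
  have R3: "VComp B (HComp2 B (Id2 B ?TK) ?Bc) ?Q = ?vKf"
    unfolding R2 using r4 fx by (simp add: T2_vc)
  have "HComp2 B (Id2 B ?TK) ?A = HComp2 B (Id2 B ?TK) ?Bc"
    using epi_cancel[OF Qinv _ _ _ _ trans[OF L3 R3[symmetric]]] fx by simp
  then show ?thesis using TK_faithful[of Y ?A ?Bc] fx by simp
qed


lemma W5_pt: assumes X: "X \<in> Ob B"
  shows "VComp B (Lam B (WK W X)) (VComp B (HComp2 B (Wv0 W X) (Id2 B (WK W X))) (Wk W X X (WK W X))) = Id2 B (WK W X)"
    (is "?L5 = _")
proof -
  let ?K = "WK W X"
  let ?TK = "WT W X X (WK W X)"
  let ?vz = "Wv0 W X"
  let ?one = "Id1 B (WD W X)"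
  let ?vKK = "Wv W X X X ?K ?K"
  let ?kK = "WT2 W X X (Wk W X X ?K)"
  have w3: "VComp B (Lam B ?TK) (VComp B (HComp2 B ?vz (Id2 B ?TK)) ?vKK)
      = VComp B (WT2 W X X (Lam B ?K)) (WT2 W X X (HComp2 B ?vz (Id2 B ?K)))"
    using W3_pt[of X X ?K] X by simp
  have t1: "WT2 W X X ?L5 = VComp B (Lam B ?TK) (VComp B (HComp2 B ?vz (Id2 B ?TK)) (VComp B ?vKK ?kK))"
    using arg_cong[OF w3, of "\<lambda>x. VComp B x ?kK"] X by (simp add: T2_vc)
  have m1: "VComp B ?vz (Lam B ?TK) = VComp B (Lam B ?one) (HComp2 B (Id2 B ?one) ?vz)"
    using lam_nat[of ?vz] X by simp
  have m2: "VComp B (HComp2 B (Id2 B ?one) ?vz) (HComp2 B ?vz (Id2 B ?TK)) = VComp B (HComp2 B ?vz (Id2 B ?one)) (HComp2 B (Id2 B ?TK) ?vz)"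
    using hc_split1[of ?vz ?vz] hc_split2[of ?vz ?vz] X by simp
  have m3: "VComp B (HComp2 B (Id2 B ?TK) ?vz) (VComp B ?vKK ?kK) = Rho B ?TK"
    using W2'[of X X ?K] X by simp
  have m4: "VComp B (Rho B ?one) ?vz = VComp B (HComp2 B ?vz (Id2 B ?one)) (Rho B ?TK)"
    using rho_nat[of ?vz] X by simp
  have m5: "VComp B (Lam B ?one) (Rho B ?one) = Id2 B ?one"
    using B5[of "WD W X"] X by simp
  have s1: "VComp B ?vz (WT2 W X X ?L5) = VComp B (Lam B ?one) (VComp B (HComp2 B (Id2 B ?one) ?vz)
        (VComp B (HComp2 B ?vz (Id2 B ?TK)) (VComp B ?vKK ?kK)))"
    unfolding t1 using arg_cong[OF m1, of "\<lambda>x. VComp B x (VComp B (HComp2 B ?vz (Id2 B ?TK)) (VComp B ?vKK ?kK))"] X by simp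
  have s2: "VComp B ?vz (WT2 W X X ?L5) = VComp B (Lam B ?one) (VComp B (HComp2 B ?vz (Id2 B ?one)) (Rho B ?TK))"
    unfolding s1 using arg_cong[OF m2, of "\<lambda>x. VComp B (Lam B ?one) (VComp B x (VComp B ?vKK ?kK))"] m3 X by simp
  have s3: "VComp B ?vz (WT2 W X X ?L5) = ?vz"
    unfolding s2 using m4[symmetric] arg_cong[OF m5, of "\<lambda>x. VComp B x ?vz"] X by simp
  have e: "VComp B ?vz (WT2 W X X ?L5) = VComp B ?vz (Id2 B ?TK)" unfolding s3 using X by simp
  have e2: "WT2 W X X ?L5 = Id2 B ?TK"
    by (rule mono_cancel[OF _ _ _ _ _ e]) (simp_all add: X)
  have e3: "WT2 W X X ?L5 = WT2 W X X (Id2 B ?K)" unfolding e2 using X by simp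
  show ?thesis by (rule T_faithful[OF _ _ _ _ _ _ _ _ e3]) (simp_all add: X)
qed

end

theorem mainTheorem1:
  fixes B :: "('o,'a,'c) bicat_data" and W :: "('o,'a,'c) warp_data"
  assumes "bicategory B"
    and "warping_data B W"
    and "warping_invertible B W"
    and "W1 B W"
    and "W2 B W"
  shows "W3 B W \<and> W4 B W \<and> W5 B W \<and> warping B W"
proof -
  interpret ctx2 B W by (unfold_locales) (fact assms)+
  have 3: "W3 B W" unfolding W3_def
  proof (intro ballI)
    fix X Y f assume a: "X \<in> Ob B" "Y \<in> Ob B" "f \<in> hom1 B X (WD W Y)"
    then have "f \<in> Arr1 B" "Src B f = X" "Trg B f = WD W Y" unfolding hom1_def by auto
    with a show "VComp B (Lam B (WT W X Y f))
       (VComp B (wl B (Wv0 W Y) (WT W X Y f)) (Wv W X Y Y (WK W Y) f))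
     = VComp B (WT2 W X Y (Lam B f)) (WT2 W X Y (wl B (Wv0 W Y) f))"
      unfolding wl_def by (intro W3_pt)
  qed
  have 4: "W4 B W" unfolding W4_def
  proof (intro ballI)
    fix X Y Z f g assume a: "X \<in> Ob B" "Y \<in> Ob B" "Z \<in> Ob B" "f \<in> hom1 B X (WD W Y)" "g \<in> hom1 B Y (WD W Z)"
    then have "f \<in> Arr1 B" "Src B f = X" "Trg B f = WD W Y" "g \<in> Arr1 B" "Src B g = Y" "Trg B g = WD W Z"
      unfolding hom1_def by auto
    with a show "VComp B (Alpha B (WK W X) (WT W X Y f) (WT W Y Z g))
       (VComp B (wl B (Wv W X Y Z g f) (WK W X)) (Wk W X Z (HComp1 B (WT W Y Z g) f)))
     = wr B (WT W Y Z g) (Wk W X Y f)"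
      unfolding wl_def wr_def by (intro W4_pt)
  qed
  have 5: "W5 B W" unfolding W5_def wl_def using W5_pt by blast
  show ?thesis unfolding warping_def skew_warping_def using 3 4 5 assms by blast
qed


end
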